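(* Let $\mathcal O=\mathbb R^n/\pi$ with $\pi\subset\mathrm{Iso}(\mathbb R^n)$ crystallographic, and let $Z=\mathrm Z_{\mathsf{GL}(n)}(H_\pi)$. Then the inclusion $Z\subset\mathcal C_\pi$ induces a bijection (homeomorphism) between $\mathcal T_{\mathrm{flat}}(\mathcal O)=\mathrm O(n)\backslash\mathcal C_\pi$ and the space of right cosets $(Z\cap\mathrm O(n))\backslash Z$; equivalently, $\mathcal T_{\mathrm{flat}}(\mathcal O)$ is the quotient of $Z$ by the relation $A\simeq B$ iff $B=OA$ for some $O\in\mathrm O(n)$.
   Context: $\mathrm{Iso}(\mathbb R^n)=\mathrm O(n)\ltimes\mathbb R^n$ with elements $(A,v)$, $x\mapsto Ax+v$; crystallographic means discrete with compact quotient; $H_\pi=\{A:\exists v,\ (A,v)\in\pi\}$. $\mathcal C_\pi=\{A\in\mathsf{GL}(n,\mathbb R):AH_\pi A^{-1}\subset\mathrm O(n)\}$ and $\mathcal T_{\mathrm{flat}}(\mathcal O)=\mathrm O(n)\backslash\mathcal C_\pi$ is the orbit space of left multiplication by $\mathrm O(n)$. $\mathrm Z_{\mathsf{GL}(n)}(H_\pi)$ is the centralizer of $H_\pi$ in $\mathsf{GL}(n,\mathbb R)$. *)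

theory Defs
  imports "HOL-Analysis.Analysis"
begin

text \<open>An isometry x \<mapsto> A x + v is represented by the pair (A, v), with A orthogonal.\<close>

definition Iso :: "((real^'n^'n) \<times> (real^'n)) set" where
  "Iso = {(A, v). orthogonal_matrix A}"

definition iso_act :: "(real^'n^'n) \<times> (real^'n) \<Rightarrow> real^'n \<Rightarrow> real^'n" where
  "iso_act g x = fst g *v x + snd g"

definition iso_comp :: "(real^'n^'n) \<times> (real^'n) \<Rightarrow> (real^'n^'n) \<times> (real^'n) \<Rightarrow> (real^'n^'n) \<times> (real^'n)" where
  "iso_comp g h = (fst g ** fst h, fst g *v snd h + snd g)"

definition iso_inv :: "(real^'n^'n) \<times> (real^'n) \<Rightarrow> (real^'n^'n) \<times> (real^'n)" where
  "iso_inv g = (transpose (fst g), - (transpose (fst g) *v snd g))"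

definition iso_subgroup :: "((real^'n^'n) \<times> (real^'n)) set \<Rightarrow> bool" where
  "iso_subgroup \<pi> \<longleftrightarrow> \<pi> \<subseteq> Iso \<and> (mat 1, 0) \<in> \<pi> \<and>
     (\<forall>g\<in>\<pi>. \<forall>h\<in>\<pi>. iso_comp g h \<in> \<pi>) \<and> (\<forall>g\<in>\<pi>. iso_inv g \<in> \<pi>)"

text \<open>Discrete subgroup of Iso(R^n) (topology of O(n) \<times> R^n) with compact quotient R^n / \<pi>.\<close>

definition crystallographic :: "((real^'n^'n) \<times> (real^'n)) set \<Rightarrow> bool" where
  "crystallographic \<pi> \<longleftrightarrow> iso_subgroup \<pi> \<and>
     (\<forall>g\<in>\<pi>. \<exists>e>0. \<forall>h\<in>\<pi>. dist h g < e \<longrightarrow> h = g) \<and>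
     (\<exists>K. compact K \<and> (\<forall>x. \<exists>g\<in>\<pi>. \<exists>y\<in>K. x = iso_act g y))"

definition Ortho :: "(real^'n^'n) set" where
  "Ortho = {Q. orthogonal_matrix Q}"

definition GL :: "(real^'n^'n) set" where
  "GL = {A. invertible A}"

definition Hpi :: "((real^'n^'n) \<times> (real^'n)) set \<Rightarrow> (real^'n^'n) set" where
  "Hpi \<pi> = {A. \<exists>v. (A, v) \<in> \<pi>}"

definition Cpi :: "((real^'n^'n) \<times> (real^'n)) set \<Rightarrow> (real^'n^'n) set" where
  "Cpi \<pi> = {A \<in> GL. \<forall>h\<in>Hpi \<pi>. A ** h ** matrix_inv A \<in> Ortho}"

definition centralizer_GL :: "(real^'n^'n) set \<Rightarrow> (real^'n^'n) set" where
  "centralizer_GL H = {A \<in> GL. \<forall>h\<in>H. A ** h = h ** A}"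

text \<open>Orbit O(n) A of left multiplication, and right coset (Z \<inter> O(n)) A.\<close>

definition left_orbit :: "(real^'n^'n) set \<Rightarrow> real^'n^'n \<Rightarrow> (real^'n^'n) set" where
  "left_orbit G A = {Q ** A | Q. Q \<in> G}"

definition T_flat :: "((real^'n^'n) \<times> (real^'n)) set \<Rightarrow> (real^'n^'n) set set" where
  "T_flat \<pi> = left_orbit Ortho ` Cpi \<pi>"

definition quot_top :: "'a topology \<Rightarrow> ('a \<Rightarrow> 'b) \<Rightarrow> 'b topology" where
  "quot_top X f = topology (\<lambda>U. U \<subseteq> f ` topspace X \<and> openin X {x \<in> topspace X. f x \<in> U})"

lemma istopology_quot: "istopology (\<lambda>U. U \<subseteq> f ` topspace X \<and> openin X {x \<in> topspace X. f x \<in> U})"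
proof -
  have 1: "{x \<in> topspace X. f x \<in> S \<inter> T} = {x \<in> topspace X. f x \<in> S} \<inter> {x \<in> topspace X. f x \<in> T}" for S T
    by blast
  have 2: "{x \<in> topspace X. f x \<in> \<Union>K} = \<Union>((\<lambda>U. {x \<in> topspace X. f x \<in> U}) ` K)" for K
    by blast
  show ?thesis unfolding istopology_def
    apply (intro conjI allI impI)
       apply blast
      apply (simp only: 1)
      apply (intro openin_Int; blast)
     apply blast
    apply (simp only: 2)
    apply (intro openin_Union; blast)
    done
qed
lemma openin_quot_top:
  "openin (quot_top X f) U \<longleftrightarrow> U \<subseteq> f ` topspace X \<and> openin X {x \<in> topspace X. f x \<in> U}"
  unfolding quot_top_def by (simp only: topology_inverse'[OF istopology_quot])
end

theory Submission
  imports Defs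
begin


definition outer :: "real^'n \<Rightarrow> real^'n \<Rightarrow> real^'n^'n" where
  "outer x y = (\<chi> i j. x$i * y$j)"

lemma mm_sub_l: "(A::real^'n^'n) ** (B - C) = A ** B - A ** C"
  by (simp add: vec_eq_iff matrix_matrix_mult_def algebra_simps sum_subtractf)
lemma mm_sub_r: "((B::real^'n^'n) - C) ** A = B ** A - C ** A"
  by (simp add: vec_eq_iff matrix_matrix_mult_def algebra_simps sum_subtractf)
lemma mm_add_r: "((B::real^'n^'n) + C) ** A = B ** A + C ** A"
  by (simp add: vec_eq_iff matrix_matrix_mult_def algebra_simps sum.distrib)
lemma mm_scale_l: "(c *\<^sub>R (A::real^'n^'n)) ** B = c *\<^sub>R (A ** B)"
  by (simp add: scalar_matrix_assoc)
lemma mm_scale_r: "(A::real^'n^'n) ** (c *\<^sub>R B) = c *\<^sub>R (A ** B)"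
  by (simp add: vec_eq_iff matrix_matrix_mult_def sum_distrib_left mult_ac)
lemma trace_scale: "trace (c *\<^sub>R (A::real^'n^'n)) = c * trace A"
  by (simp add: trace_def sum_distrib_left)

lemma outer_mul: "outer x y ** outer z w = (y \<bullet> z) *\<^sub>R outer x w"
  by (simp add: vec_eq_iff matrix_matrix_mult_def outer_def inner_vec_def sum_distrib_left sum_distrib_right mult_ac)

lemma transpose_outer: "transpose (outer x y) = outer y x"
  by (simp add: vec_eq_iff transpose_def outer_def mult_ac)

lemma trace_outer: "trace (outer x y ** (B::real^'n^'n)) = y \<bullet> (B *v x)"
  apply (simp add: trace_def matrix_matrix_mult_def outer_def inner_vec_def matrix_vector_mult_def
      sum_distrib_left)
  apply (subst sum.swap)
  apply (simp add: mult_ac)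
  done

definition rfl :: "real^'n \<Rightarrow> real^'n^'n" where
  "rfl x = mat 1 - (2 / (x \<bullet> x)) *\<^sub>R outer x x"

lemma rfl_orth: assumes "x \<noteq> 0" shows "orthogonal_matrix (rfl x)"
proof -
  have "transpose (rfl x) = rfl x"
    by (simp add: rfl_def transpose_def vec_eq_iff outer_def mat_def mult_ac)
  moreover have "rfl x ** rfl x = mat 1"
  proof -
    define c where "c = 2 / (x \<bullet> x)"
    have cc: "c * (c * (x \<bullet> x)) = 2 * c" using assms by (simp add: c_def)
    have "rfl x ** rfl x = mat 1 - c *\<^sub>R outer x x - c *\<^sub>R outer x x + (c * (c * (x \<bullet> x))) *\<^sub>R outer x x"
      unfolding rfl_def c_def[symmetric]
      by (simp add: mm_sub_l mm_sub_r mm_scale_l mm_scale_r outer_mul scaleR_diff_right scaleR_scaleR)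
    also have "\<dots> = mat 1" unfolding cc by (simp add: scaleR_left_distrib[symmetric] algebra_simps)
    finally show ?thesis .
  qed
  ultimately show ?thesis by (simp add: orthogonal_matrix)
qed

lemma trace_rfl: "trace (rfl x ** B) = trace B - (2 / (x \<bullet> x)) * (x \<bullet> (B *v x))"
  by (simp add: rfl_def mm_sub_r mm_scale_l trace_sub trace_scale trace_outer)

lemma trace_rfl2: "trace (rfl x ** rfl y ** B) = trace B - (2 / (x \<bullet> x)) * (x \<bullet> (B *v x))
   - (2 / (y \<bullet> y)) * (y \<bullet> (B *v y)) + (2 / (x \<bullet> x)) * (2 / (y \<bullet> y)) * (x \<bullet> y) * (y \<bullet> (B *v x))"
  by (simp add: rfl_def mm_sub_r mm_sub_l mm_scale_l mm_scale_r outer_mul trace_sub trace_add trace_scale trace_outer mm_add_r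
       algebra_simps)

lemma max_psd:
  assumes "\<forall>U. orthogonal_matrix U \<longrightarrow> trace (U ** B) \<le> trace (B::real^'n^'n)"
  shows "x \<bullet> (B *v x) \<ge> 0"
proof (cases "x = 0")
  case True then show ?thesis by simp
next
  case False
  have "trace (rfl x ** B) \<le> trace B" using assms rfl_orth[OF False] by blast
  then have "(2 / (x \<bullet> x)) * (x \<bullet> (B *v x)) \<ge> 0" by (simp add: trace_rfl)
  moreover have "x \<bullet> x > 0" using False by simp
  ultimately show ?thesis by (simp add: zero_le_divide_iff)
qed

lemma real_small: assumes "\<forall>t::real. t > 0 \<longrightarrow> b \<le> t * k" shows "b \<le> 0"
proof (rule ccontr)
  assume "\<not> b \<le> 0"
  then have b: "b > 0" by simp
  define t where "t = b / (2 * (\<bar>k\<bar> + 1))"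
  have t: "t > 0" using b by (simp add: t_def)
  have "t * k \<le> t * \<bar>k\<bar>" using t by (simp add: mult_left_mono)
  also have "\<dots> < b"
  proof -
    have "b * \<bar>k\<bar> \<ge> 0" using b by simp
    then show ?thesis using b by (simp add: t_def field_simps) (smt (verit) mult_nonneg_nonneg abs_ge_zero)
  qed
  finally show False using assms t by force
qed

lemma alg_ineq:
  fixes a d al be t :: real
  assumes t: "t > 0" and h: "- 2 * a - 2 / (1 + t^2) * (a + t * (al + be) + t^2 * d) + 4 / (1 + t^2) * (a + t * be) \<le> 0"
  shows "be - al \<le> t * (a + d)"
proof -
  have N: "1 + t^2 > 0" by (simp add: add_pos_nonneg)
  have "(1 + t^2) * (- 2 * a - 2 / (1 + t^2) * (a + t * (al + be) + t^2 * d) + 4 / (1 + t^2) * (a + t * be)) \<le> 0"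
    using N h by (simp add: mult_nonneg_nonpos)
  moreover have "(1 + t^2) * (- 2 * a - 2 / (1 + t^2) * (a + t * (al + be) + t^2 * d) + 4 / (1 + t^2) * (a + t * be))
     = 2 * t * ((be - al) - t * (a + d))" (is "?L = ?R")
  proof -
    have e1: "(1 + t^2) * (2 / (1 + t^2) * (a + t * (al + be) + t^2 * d)) = 2 * (a + t * (al + be) + t^2 * d)"
      using N by simp
    have e2: "(1 + t^2) * (4 / (1 + t^2) * (a + t * be)) = 4 * (a + t * be)"
      using N by simp
    have "?L = (1 + t^2) * (- 2 * a) - (1 + t^2) * (2 / (1 + t^2) * (a + t * (al + be) + t^2 * d))
       + (1 + t^2) * (4 / (1 + t^2) * (a + t * be))"
      by (simp only: distrib_left right_diff_distrib)
    also have "\<dots> = (1 + t^2) * (- 2 * a) - 2 * (a + t * (al + be) + t^2 * d) + 4 * (a + t * be)"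
      unfolding e1 e2 ..
    also have "\<dots> = ?R" by (simp add: algebra_simps power2_eq_square)
    finally show ?thesis .
  qed
  ultimately have "2 * t * ((be - al) - t * (a + d)) \<le> 0" by simp
  then have "(be - al) - t * (a + d) \<le> 0" using t by (simp add: mult_le_0_iff)
  then show ?thesis by simp
qed

lemma mv_axis: "((B::real^'n^'n) *v axis j 1) $ k = B$k$j"
  by (simp add: matrix_vector_mult_def axis_def if_distrib[of "\<lambda>x. _ * x"] cong: if_cong)

lemma mv_lin: "(B::real^'n^'n) *v (u + t *\<^sub>R w) = B *v u + t *\<^sub>R (B *v w)"
  by (simp add: vec_eq_iff matrix_vector_mult_def sum.distrib algebra_simps sum_distrib_left)

lemma max_sym_entry:
  assumes max: "\<forall>U. orthogonal_matrix U \<longrightarrow> trace (U ** B) \<le> trace (B::real^'n^'n)"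
    and ij: "i \<noteq> j"
  shows "B$j$i \<le> B$i$j"
proof -
  let ?a = "B$i$i" and ?d = "B$j$j" and ?al = "B$i$j" and ?be = "B$j$i"
  have "?be - ?al \<le> t * (?a + ?d)" if t: "t > 0" for t
  proof -
    define x :: "real^'n" where "x = axis i 1"
    define y :: "real^'n" where "y = axis i 1 + t *\<^sub>R axis j 1"
    have x0: "x \<noteq> 0" by (simp add: x_def)
    have y0: "y \<noteq> 0" using ij by (simp add: y_def vec_eq_iff axis_def) (metis)
    have xx: "x \<bullet> x = 1" by (simp add: x_def)
    have yy: "y \<bullet> y = 1 + t^2" using ij by (simp add: y_def inner_add_left inner_add_right inner_axis_axis power2_eq_square)
    have xy: "x \<bullet> y = 1" using ij by (simp add: x_def y_def inner_add_right inner_axis_axis)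
    have qx: "x \<bullet> (B *v x) = ?a" by (simp add: x_def inner_axis' mv_axis)
    have qyx: "y \<bullet> (B *v x) = ?a + t * ?be"
      by (simp add: x_def y_def inner_add_left inner_axis' mv_axis)
    have qy: "y \<bullet> (B *v y) = ?a + t * (?al + ?be) + t^2 * ?d"
      unfolding y_def mv_lin
      by (simp add: inner_add_left inner_add_right inner_axis' inner_axis mv_axis algebra_simps power2_eq_square)
    have "trace (rfl x ** rfl y ** B) \<le> trace B"
      using max rfl_orth[OF x0] rfl_orth[OF y0] orthogonal_matrix_mul by blast
    then have ineq: "- 2 * ?a - 2 / (1 + t^2) * (?a + t * (?al + ?be) + t^2 * ?d) + 4 / (1 + t^2) * (?a + t * ?be) \<le> 0"
      unfolding trace_rfl2 xx yy xy qx qyx qy by simp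
    show ?thesis using alg_ineq[OF t ineq] .
  qed
  then have "?be - ?al \<le> 0" by (intro real_small) auto
  then show ?thesis by simp
qed

lemma max_sym:
  assumes max: "\<forall>U. orthogonal_matrix U \<longrightarrow> trace (U ** B) \<le> trace (B::real^'n^'n)"
  shows "transpose B = B"
proof -
  have "B$j$i = B$i$j" for i j
    using max_sym_entry[OF max, of i j] max_sym_entry[OF max, of j i] by (cases "i = j") auto
  then show ?thesis by (simp add: vec_eq_iff transpose_def)
qed

lemma inner_mv_transpose: "x \<bullet> ((B::real^'n^'n) *v y) = (transpose B *v x) \<bullet> y"
  apply (simp add: inner_vec_def matrix_vector_mult_def transpose_def sum_distrib_left sum_distrib_right)
  apply (subst sum.swap)
  apply (simp add: mult_ac)
  done

lemma psd_zero:
  fixes B :: "real^'n^'n"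
  assumes sym: "transpose B = B" and psd: "\<forall>z. z \<bullet> (B *v z) \<ge> 0" and x0: "x \<bullet> (B *v x) = 0"
  shows "B *v x = 0"
proof -
  define y where "y = B *v x"
  have xy: "x \<bullet> (B *v y) = y \<bullet> y" using sym by (simp add: inner_mv_transpose y_def)
  have yx: "y \<bullet> (B *v x) = y \<bullet> y" by (simp add: y_def)
  have "2 * (y \<bullet> y) \<le> e * (y \<bullet> (B *v y))" if e: "e > 0" for e
  proof -
    have "0 \<le> (x - e *\<^sub>R y) \<bullet> (B *v (x - e *\<^sub>R y))" using psd by blast
    also have "B *v (x - e *\<^sub>R y) = B *v x - e *\<^sub>R (B *v y)"
      by (simp add: vec_eq_iff matrix_vector_mult_def algebra_simps sum_subtractf sum_distrib_left)
    also have "(x - e *\<^sub>R y) \<bullet> (B *v x - e *\<^sub>R (B *v y)) = x \<bullet> (B *v x) - e * (x \<bullet> (B *v y)) - e * (y \<bullet> (B *v x)) + e * e * (y \<bullet> (B *v y))"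
      by (simp add: inner_diff_left inner_diff_right algebra_simps)
    finally have "0 \<le> - 2 * e * (y \<bullet> y) + e * e * (y \<bullet> (B *v y))" using x0 xy yx by simp
    then have "e * (2 * (y \<bullet> y)) \<le> e * (e * (y \<bullet> (B *v y)))" by (simp add: algebra_simps)
    then show ?thesis using e by simp
  qed
  then have "2 * (y \<bullet> y) \<le> 0" by (intro real_small) auto
  then have "y = 0" by (metis antisym inner_ge_zero inner_eq_zero_iff mult_le_0_iff zero_less_numeral leD)
  then show ?thesis by (simp add: y_def)
qed

lemma trace_tCBC: "trace (transpose C ** (B::real^'n^'n) ** C) = (\<Sum>i\<in>UNIV. column i C \<bullet> (B *v column i C))"
  apply (simp add: trace_def matrix_matrix_mult_def transpose_def column_def inner_vec_def matrix_vector_mult_def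
      sum_distrib_left sum_distrib_right mult_ac)
  apply (rule sum.cong[OF refl])
  apply (subst sum.swap)
  apply (simp add: mult_ac)
  done

lemma trace_psd_nonneg:
  assumes "\<forall>z. z \<bullet> ((B::real^'n^'n) *v z) \<ge> 0"
  shows "trace (transpose C ** B ** C) \<ge> 0"
  unfolding trace_tCBC using assms by (simp add: sum_nonneg)

lemma sqrt_unique:
  fixes B1 B2 :: "real^'n^'n"
  assumes s1: "transpose B1 = B1" and s2: "transpose B2 = B2"
    and p1: "\<forall>z. z \<bullet> (B1 *v z) \<ge> 0" and p2: "\<forall>z. z \<bullet> (B2 *v z) \<ge> 0"
    and inv: "invertible B1" and sq: "B1 ** B1 = B2 ** B2"
  shows "B1 = B2"
proof -
  define D where "D = B1 - B2"
  have sD: "transpose D = D" using s1 s2 by (simp add: D_def vec_eq_iff transpose_def)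
  have X: "B1 ** D + D ** B2 = 0"
    using sq by (simp add: D_def mm_sub_l mm_sub_r)
  have "trace (D ** (B1 ** D)) + trace (D ** (D ** B2)) = trace (D ** (B1 ** D + D ** B2))"
    by (simp add: matrix_add_ldistrib trace_add)
  also have "\<dots> = 0" using X by (simp add: trace_def)
  finally have sum0: "trace (D ** (B1 ** D)) + trace (D ** (D ** B2)) = 0" .
  have t1: "trace (D ** (B1 ** D)) = trace (transpose D ** B1 ** D)" using sD by (simp add: matrix_mul_assoc)
  have t2: "trace (D ** (D ** B2)) = trace (transpose D ** B2 ** D)"
    using sD trace_mul_sym[of D "D ** B2"] by (simp add: matrix_mul_assoc)
  have n1: "trace (transpose D ** B1 ** D) \<ge> 0" using trace_psd_nonneg[OF p1] .
  have n2: "trace (transpose D ** B2 ** D) \<ge> 0" using trace_psd_nonneg[OF p2] .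
  have z: "trace (transpose D ** B1 ** D) = 0" using sum0 t1 t2 n1 n2 by linarith
  have "\<forall>i\<in>UNIV. column i D \<bullet> (B1 *v column i D) = 0"
    using z p1 unfolding trace_tCBC by (subst (asm) sum_nonneg_eq_0_iff) auto
  then have "B1 *v column i D = 0" for i using psd_zero[OF s1 p1] by blast
  then have "column i D = 0" for i
    using inj_matrix_vector_mult[OF inv] by (metis injD matrix_vector_mult_0_right)
  then have "D = 0" by (simp add: vec_eq_iff column_def)
  then show ?thesis by (simp add: D_def)
qed

lemma compact_Ortho: "compact {Q::real^'n^'n. orthogonal_matrix Q}"
proof (subst compact_eq_bounded_closed, intro conjI)
  have "norm Q \<le> real CARD('n)" if "orthogonal_matrix Q" for Q :: "real^'n^'n"
  proof -
    have r: "norm (Q$i) = 1" for i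
      using that unfolding orthogonal_matrix_orthonormal_rows by (metis row_def vec_nth_inverse)
    have "norm Q \<le> (\<Sum>i\<in>UNIV. norm (Q$i))" unfolding norm_vec_def by (rule L2_set_le_sum) simp
    then show ?thesis using r by simp
  qed
  then show "bounded {Q::real^'n^'n. orthogonal_matrix Q}" unfolding bounded_iff by blast
  have eq: "{Q::real^'n^'n. orthogonal_matrix Q} = (\<Inter>i. \<Inter>j. {Q. (transpose Q ** Q)$i$j = (mat 1 :: real^'n^'n)$i$j})"
    by (auto simp: orthogonal_matrix vec_eq_iff)
  have c: "continuous_on UNIV (\<lambda>Q::real^'n^'n. (transpose Q ** Q)$i$j)" for i j
    by (simp add: matrix_matrix_mult_def transpose_def) (intro continuous_intros)
  show "closed {Q::real^'n^'n. orthogonal_matrix Q}"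
    unfolding eq by (intro closed_INT ballI closed_Collect_eq continuous_on_const c)
qed

lemma orth_invertible: "orthogonal_matrix (Q::real^'n^'n) \<Longrightarrow> invertible Q"
  unfolding orthogonal_matrix_def invertible_def by blast

lemma minv:
  assumes "invertible (A::real^'n^'n)"
  shows "A ** matrix_inv A = mat 1" "matrix_inv A ** A = mat 1"
proof -
  have "A ** matrix_inv A = mat 1 \<and> matrix_inv A ** A = mat 1"
    unfolding matrix_inv_def by (rule someI_ex[OF assms[unfolded invertible_def]])
  then show "A ** matrix_inv A = mat 1" "matrix_inv A ** A = mat 1" by simp_all
qed

lemma exists_max:
  fixes A :: "real^'n^'n"
  shows "\<exists>Q. orthogonal_matrix Q \<and> (\<forall>U. orthogonal_matrix U \<longrightarrow> trace (U ** A) \<le> trace (Q ** A))"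
proof -
  have c: "continuous_on {Q::real^'n^'n. orthogonal_matrix Q} (\<lambda>Q. trace (Q ** A))"
    by (simp add: trace_def matrix_matrix_mult_def) (intro continuous_intros)
  have ne: "{Q::real^'n^'n. orthogonal_matrix Q} \<noteq> {}" using orthogonal_matrix_id by blast
  show ?thesis using continuous_attains_sup[OF compact_Ortho ne c] by auto
qed

lemma max_unique:
  fixes A Q1 Q2 :: "real^'n^'n"
  assumes inv: "invertible A" and o1: "orthogonal_matrix Q1" and o2: "orthogonal_matrix Q2"
    and m1: "\<forall>U. orthogonal_matrix U \<longrightarrow> trace (U ** A) \<le> trace (Q1 ** A)"
    and m2: "\<forall>U. orthogonal_matrix U \<longrightarrow> trace (U ** A) \<le> trace (Q2 ** A)"
  shows "Q1 ** A = Q2 ** A"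
proof -
  have mx: "\<forall>U. orthogonal_matrix U \<longrightarrow> trace (U ** (Q ** A)) \<le> trace (Q ** A)"
    if "orthogonal_matrix Q" "\<forall>U. orthogonal_matrix U \<longrightarrow> trace (U ** A) \<le> trace (Q ** A)" for Q
  proof (intro allI impI)
    fix U :: "real^'n^'n" assume "orthogonal_matrix U"
    then have "orthogonal_matrix (U ** Q)" using that(1) by (simp add: orthogonal_matrix_mul)
    then have "trace ((U ** Q) ** A) \<le> trace (Q ** A)" using that(2) by blast
    then show "trace (U ** (Q ** A)) \<le> trace (Q ** A)" by (simp add: matrix_mul_assoc)
  qed
  have sq: "(Q ** A) ** (Q ** A) = transpose A ** A"
    if "orthogonal_matrix Q" "\<forall>U. orthogonal_matrix U \<longrightarrow> trace (U ** A) \<le> trace (Q ** A)" for Q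
  proof -
    have "(Q ** A) ** (Q ** A) = transpose (Q ** A) ** (Q ** A)" using max_sym[OF mx[OF that]] by simp
    also have "\<dots> = transpose A ** (transpose Q ** Q) ** A"
      by (simp add: matrix_transpose_mul matrix_mul_assoc)
    also have "\<dots> = transpose A ** A" using that(1) by (simp add: orthogonal_matrix)
    finally show ?thesis .
  qed
  have p1: "\<forall>z. z \<bullet> ((Q1 ** A) *v z) \<ge> 0" using max_psd[OF mx[OF o1 m1]] by blast
  have p2: "\<forall>z. z \<bullet> ((Q2 ** A) *v z) \<ge> 0" using max_psd[OF mx[OF o2 m2]] by blast
  have e: "(Q1 ** A) ** (Q1 ** A) = (Q2 ** A) ** (Q2 ** A)" using sq[OF o1 m1] sq[OF o2 m2] by simp
  show ?thesis
    by (rule sqrt_unique[OF max_sym[OF mx[OF o1 m1]] max_sym[OF mx[OF o2 m2]] p1 p2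
       invertible_mult[OF orth_invertible[OF o1] inv] e])
qed

lemma polar_commute:
  fixes A :: "real^'n^'n" and H :: "(real^'n^'n) set"
  assumes inv: "invertible A" and Ho: "\<forall>h\<in>H. orthogonal_matrix h"
    and conj: "\<forall>h\<in>H. orthogonal_matrix (A ** h ** matrix_inv A)"
  shows "\<exists>Q. orthogonal_matrix Q \<and> (\<forall>h\<in>H. (Q ** A) ** h = h ** (Q ** A))"
proof -
  obtain Q where oQ: "orthogonal_matrix Q" and mQ: "\<forall>U. orthogonal_matrix U \<longrightarrow> trace (U ** A) \<le> trace (Q ** A)"
    using exists_max by blast
  have "(Q ** A) ** h = h ** (Q ** A)" if hH: "h \<in> H" for h
  proof -
    define g where "g = A ** h ** matrix_inv A"
    have og: "orthogonal_matrix g" using conj hH by (simp add: g_def)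
    have oh: "orthogonal_matrix h" using Ho hH by blast
    define Q' where "Q' = transpose h ** Q ** g"
    have oQ': "orthogonal_matrix Q'" unfolding Q'_def
      using oh oQ og by (simp add: orthogonal_matrix_mul)
    have "g ** A = (A ** h) ** (matrix_inv A ** A)" by (simp add: g_def matrix_mul_assoc)
    then have gA: "g ** A = A ** h" by (simp add: minv(2)[OF inv])
    have "Q' ** A = transpose h ** (Q ** (g ** A))" by (simp add: Q'_def matrix_mul_assoc)
    then have Q'A: "Q' ** A = transpose h ** (Q ** A ** h)" by (simp add: gA matrix_mul_assoc)
    have hht: "h ** transpose h = mat 1" using oh by (simp add: orthogonal_matrix_def)
    have "trace (Q' ** A) = trace (Q ** A ** h ** transpose h)"
      unfolding Q'A trace_mul_sym[of "transpose h"] by simp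
    also have "\<dots> = trace (Q ** A)" by (simp add: hht flip: matrix_mul_assoc)
    finally have tr: "trace (Q' ** A) = trace (Q ** A)" .
    have mQ': "\<forall>U. orthogonal_matrix U \<longrightarrow> trace (U ** A) \<le> trace (Q' ** A)" using mQ tr by simp
    have "Q' ** A = Q ** A" using max_unique[OF inv oQ' oQ mQ' mQ] .
    then have "transpose h ** (Q ** A ** h) = Q ** A" using Q'A by simp
    then have "h ** (transpose h ** (Q ** A ** h)) = h ** (Q ** A)" by simp
    then show ?thesis by (simp add: hht matrix_mul_assoc)
  qed
  then show ?thesis using oQ by blast
qed


lemma topspace_quot: "topspace (quot_top X f) = f ` topspace X"
proof
  show "topspace (quot_top X f) \<subseteq> f ` topspace X"
    using openin_topspace[of "quot_top X f"] unfolding openin_quot_top by blast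
  have "openin (quot_top X f) (f ` topspace X)"
    unfolding openin_quot_top by (simp add: Collect_conj_eq[symmetric]) (metis (no_types, lifting) Collect_cong image_eqI openin_topspace Collect_mem_eq)
  then show "f ` topspace X \<subseteq> topspace (quot_top X f)" by (rule openin_subset)
qed

lemma left_orbit_mem: "mat 1 \<in> G \<Longrightarrow> A \<in> left_orbit G A"
  unfolding left_orbit_def by (metis (mono_tags, lifting) matrix_mul_lid mem_Collect_eq)

lemma left_orbit_shift:
  fixes G :: "(real^'n^'n) set"
  assumes mul: "\<And>P R. P \<in> G \<Longrightarrow> R \<in> G \<Longrightarrow> P ** R \<in> G"
    and inv: "\<And>P. P \<in> G \<Longrightarrow> transpose P \<in> G"
    and orth: "\<And>P. P \<in> G \<Longrightarrow> orthogonal_matrix P"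
    and Q: "Q \<in> G"
  shows "left_orbit G (Q ** B) = left_orbit G B"
proof
  show "left_orbit G (Q ** B) \<subseteq> left_orbit G B"
    unfolding left_orbit_def using mul Q by (auto simp: matrix_mul_assoc)
  show "left_orbit G B \<subseteq> left_orbit G (Q ** B)"
  proof
    fix M assume "M \<in> left_orbit G B"
    then obtain R where R: "R \<in> G" "M = R ** B" unfolding left_orbit_def by blast
    have "M = (R ** transpose Q) ** (Q ** B)"
      using orth[OF Q] R(2) by (simp add: orthogonal_matrix_def matrix_mul_assoc[symmetric])
        (simp add: matrix_mul_assoc)
    then show "M \<in> left_orbit G (Q ** B)" unfolding left_orbit_def using mul[OF R(1) inv[OF Q]] by blast
  qed
qed

lemma Hpi_orth:
  assumes "crystallographic \<pi>" "h \<in> Hpi \<pi>"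
  shows "orthogonal_matrix h"
  using assms unfolding crystallographic_def iso_subgroup_def Hpi_def Iso_def by auto

lemma cent_inv:
  fixes B :: "real^'n^'n"
  assumes "invertible B" "B ** h = h ** B"
  shows "matrix_inv B ** h = h ** matrix_inv B"
proof -
  have "matrix_inv B ** h = matrix_inv B ** h ** (B ** matrix_inv B)" by (simp add: minv[OF assms(1)])
  also have "\<dots> = matrix_inv B ** (B ** h) ** matrix_inv B" using assms(2) by (simp add: matrix_mul_assoc)
  also have "\<dots> = h ** matrix_inv B" by (simp add: matrix_mul_assoc minv[OF assms(1)])
  finally show ?thesis .
qed

lemma closed_cent: "closed {M::real^'n^'n. \<forall>h\<in>H. M ** h = h ** M}"
proof -
  have eq: "{M::real^'n^'n. \<forall>h\<in>H. M ** h = h ** M} = (\<Inter>h\<in>H. \<Inter>i. \<Inter>j. {M. (M ** h)$i$j = (h ** M)$i$j})"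
    by (auto simp: vec_eq_iff)
  have c1: "continuous_on UNIV (\<lambda>M::real^'n^'n. (M ** h)$i$j)" for h i j
    by (simp add: matrix_matrix_mult_def) (intro continuous_intros)
  have c2: "continuous_on UNIV (\<lambda>M::real^'n^'n. (h ** M)$i$j)" for h i j
    by (simp add: matrix_matrix_mult_def) (intro continuous_intros)
  show ?thesis unfolding eq by (intro closed_INT ballI closed_Collect_eq c1 c2)
qed

lemma closed_orbit_set:
  fixes K :: "(real^'n^'n) set"
  assumes K: "closed K"
  shows "closed {A. \<exists>Q. orthogonal_matrix Q \<and> transpose Q ** A \<in> K}"
proof -
  define f where "f = (\<lambda>p::(real^'n^'n) \<times> (real^'n^'n). transpose (fst p) ** snd p)"
  have cf: "continuous_on UNIV f"
    unfolding f_def by (simp add: matrix_matrix_mult_def transpose_def) (intro continuous_intros)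
  have cl: "closed (f -` K)" using cf K continuous_on_closed_vimage[of UNIV f] by simp
  have "closedin (top_of_set ({Q. orthogonal_matrix Q} \<times> UNIV)) (({Q. orthogonal_matrix Q} \<times> UNIV) \<inter> f -` K)"
    by (rule closedin_closed_Int[OF cl])
  from closedin_compact_projection[OF compact_Ortho this]
  have "closedin (top_of_set UNIV) {y. \<exists>x. x \<in> {Q. orthogonal_matrix Q} \<and> (x, y) \<in> ({Q. orthogonal_matrix Q} \<times> UNIV) \<inter> f -` K}" .
  then show ?thesis by (simp add: f_def)
qed

theorem mainTheorem11:
  fixes \<pi> :: "((real^'n^'n) \<times> (real^'n)) set"
  assumes "crystallographic \<pi>"
  defines "Z \<equiv> centralizer_GL (Hpi \<pi>)"
  shows "Z \<subseteq> Cpi \<pi>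
    \<and> (\<forall>A\<in>Cpi \<pi>. \<exists>Q\<in>Ortho. \<exists>B\<in>Z. A = Q ** B)
    \<and> (\<forall>A\<in>Z. \<forall>B\<in>Z. (left_orbit Ortho A = left_orbit Ortho B
                      \<longleftrightarrow> left_orbit (Z \<inter> Ortho) A = left_orbit (Z \<inter> Ortho) B))
    \<and> (\<exists>\<phi>. (\<forall>B\<in>Z. \<phi> (left_orbit (Z \<inter> Ortho) B) = left_orbit Ortho B)
           \<and> homeomorphic_map
               (quot_top (subtopology euclidean Z) (left_orbit (Z \<inter> Ortho)))
               (quot_top (subtopology euclidean (Cpi \<pi>)) (left_orbit Ortho)) \<phi>)"
proof -
  let ?H = "Hpi \<pi>"
  let ?C = "Cpi \<pi>"
  let ?qZ = "left_orbit (Z \<inter> Ortho)"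
  let ?qC = "left_orbit Ortho"
  have Ho: "\<forall>h\<in>?H. orthogonal_matrix h" using Hpi_orth[OF assms(1)] by blast
  have Zmem: "B \<in> Z \<longleftrightarrow> invertible B \<and> (\<forall>h\<in>?H. B ** h = h ** B)" for B
    by (simp add: Z_def centralizer_GL_def GL_def)
  have Cmem: "A \<in> ?C \<longleftrightarrow> invertible A \<and> (\<forall>h\<in>?H. orthogonal_matrix (A ** h ** matrix_inv A))" for A
    by (simp add: Cpi_def GL_def Ortho_def)
  have Omem: "Q \<in> Ortho \<longleftrightarrow> orthogonal_matrix Q" for Q by (simp add: Ortho_def)
  have P1: "Z \<subseteq> ?C"
  proof
    fix A assume A: "A \<in> Z"
    have "A ** h ** matrix_inv A = h" if "h \<in> ?H" for h
    proof -
      have "A ** h ** matrix_inv A = h ** (A ** matrix_inv A)" using A that Zmem by (simp add: matrix_mul_assoc)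
      then show ?thesis using A Zmem by (simp add: minv)
    qed
    then show "A \<in> ?C" using A Ho by (simp add: Zmem Cmem)
  qed
  have P2: "\<forall>A\<in>?C. \<exists>Q\<in>Ortho. \<exists>B\<in>Z. A = Q ** B"
  proof
    fix A assume A: "A \<in> ?C"
    obtain Q where oQ: "orthogonal_matrix Q" and cQ: "\<forall>h\<in>?H. (Q ** A) ** h = h ** (Q ** A)"
      using polar_commute[of A ?H] A Cmem Ho by blast
    have "Q ** A \<in> Z" using Zmem cQ invertible_mult[OF orth_invertible[OF oQ]] A Cmem by blast
    moreover have "A = transpose Q ** (Q ** A)"
      using oQ by (simp add: matrix_mul_assoc orthogonal_matrix)
    moreover have "transpose Q \<in> Ortho" using oQ by (simp add: Omem)
    ultimately show "\<exists>Q\<in>Ortho. \<exists>B\<in>Z. A = Q ** B" by blast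
  qed
  have Ogrp: "left_orbit Ortho (Q ** B) = left_orbit Ortho B" if "Q \<in> Ortho" for Q B
    by (rule left_orbit_shift) (use that in \<open>auto simp: Omem orthogonal_matrix_mul\<close>)
  have ZOtr: "transpose P \<in> Z" if "P \<in> Z \<inter> Ortho" for P
  proof -
    have oP: "orthogonal_matrix P" using that Omem by blast
    have "transpose P ** h = h ** transpose P" if "h \<in> ?H" for h
    proof -
      have Ph: "P ** h = h ** P" using \<open>P \<in> Z \<inter> Ortho\<close> that Zmem by blast
      have "transpose P ** h = transpose P ** h ** (P ** transpose P)" using oP by (simp add: orthogonal_matrix_def)
      also have "\<dots> = transpose P ** (P ** h) ** transpose P" using Ph by (simp add: matrix_mul_assoc)
      also have "\<dots> = h ** transpose P" using oP by (simp add: orthogonal_matrix_def matrix_mul_assoc)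
      finally show ?thesis .
    qed
    then show ?thesis using orth_invertible[of "transpose P"] oP by (simp add: Zmem)
  qed
  have ZOmul: "P ** R \<in> Z" if "P \<in> Z" "R \<in> Z" for P R
  proof -
    have "P ** R ** h = h ** (P ** R)" if "h \<in> ?H" for h
    proof -
      have "P ** R ** h = P ** (R ** h)" by (simp add: matrix_mul_assoc)
      also have "\<dots> = (P ** h) ** R" using \<open>R \<in> Z\<close> Zmem that by (simp add: matrix_mul_assoc)
      also have "\<dots> = h ** (P ** R)" using \<open>P \<in> Z\<close> Zmem that by (simp add: matrix_mul_assoc)
      finally show ?thesis .
    qed
    moreover have "invertible (P ** R)" using that Zmem invertible_mult by blast
    ultimately show ?thesis by (simp add: Zmem)
  qed
  have ZOgrp: "?qZ (Q ** B) = ?qZ B" if "Q \<in> Z \<inter> Ortho" for Q B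
    by (rule left_orbit_shift) (use that ZOtr ZOmul in \<open>auto simp: Omem orthogonal_matrix_mul\<close>)
  have id1: "mat 1 \<in> Z \<inter> Ortho" using orth_invertible[OF orthogonal_matrix_id] by (simp add: Zmem Omem orthogonal_matrix_id)
  have id2: "mat 1 \<in> Ortho" by (simp add: Omem orthogonal_matrix_id)
  have P3: "?qC A = ?qC B \<longleftrightarrow> ?qZ A = ?qZ B" if A: "A \<in> Z" and B: "B \<in> Z" for A B
  proof
    assume eq: "?qC A = ?qC B"
    then have "A \<in> ?qC B" using left_orbit_mem[OF id2] by metis
    then obtain Q where Q: "Q \<in> Ortho" "A = Q ** B" unfolding left_orbit_def by blast
    have invB: "invertible B" using B Zmem by blast
    have QA: "Q = A ** matrix_inv B" using Q(2) by (simp add: matrix_mul_assoc[symmetric] minv[OF invB])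
    have "Q \<in> Z"
    proof -
      have "Q ** h = h ** Q" if "h \<in> ?H" for h
      proof -
        have "Q ** h = A ** (matrix_inv B ** h)" by (simp add: QA matrix_mul_assoc)
        also have "\<dots> = A ** h ** matrix_inv B" using cent_inv[OF invB] B Zmem that by (simp add: matrix_mul_assoc)
        also have "\<dots> = h ** Q" using A Zmem that by (simp add: QA matrix_mul_assoc)
        finally show ?thesis .
      qed
      then show ?thesis using Q(1) orth_invertible[of Q] by (simp add: Zmem Omem)
    qed
    then show "?qZ A = ?qZ B" using ZOgrp[of Q B] Q by simp
  next
    assume eq: "?qZ A = ?qZ B"
    then have "A \<in> ?qZ B" using left_orbit_mem[OF id1] by metis
    then obtain Q where Q: "Q \<in> Z \<inter> Ortho" "A = Q ** B" unfolding left_orbit_def by blast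
    then show "?qC A = ?qC B" using Ogrp[of Q B] by simp
  qed
  define \<phi> where "\<phi> S = ?qC (SOME B. B \<in> Z \<and> S = ?qZ B)" for S
  have phi: "\<phi> (?qZ B) = ?qC B" if "B \<in> Z" for B
  proof -
    have "\<exists>B'. B' \<in> Z \<and> ?qZ B = ?qZ B'" using that by blast
    then have "(SOME B'. B' \<in> Z \<and> ?qZ B = ?qZ B') \<in> Z \<and> ?qZ B = ?qZ (SOME B'. B' \<in> Z \<and> ?qZ B = ?qZ B')"
      by (rule someI_ex)
    then have "?qC (SOME B'. B' \<in> Z \<and> ?qZ B = ?qZ B') = ?qC B"
      using P3[OF that, of "SOME B'. B' \<in> Z \<and> ?qZ B = ?qZ B'"] by simp
    then show ?thesis unfolding \<phi>_def .
  qed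
  have phiimg: "\<phi> ` (?qZ ` W) = ?qC ` W" if "W \<subseteq> Z" for W
    unfolding image_image by (rule image_cong[OF refl]) (use phi that in blast)
  have img_sub: "?qC ` Z \<subseteq> ?qC ` ?C" using P1 by (rule image_mono)
  let ?X = "quot_top (subtopology euclidean Z) ?qZ"
  let ?Y = "quot_top (subtopology euclidean ?C) ?qC"
  have tX: "topspace ?X = ?qZ ` Z" by (simp add: topspace_quot)
  have tY: "topspace ?Y = ?qC ` ?C" by (simp add: topspace_quot)
  have hom: "homeomorphic_map ?X ?Y \<phi>"
  proof (rule bijective_open_imp_homeomorphic_map)
    show "\<phi> ` topspace ?X = topspace ?Y"
    proof
      show "\<phi> ` topspace ?X \<subseteq> topspace ?Y" unfolding tX tY phiimg[OF order_refl] by (rule img_sub)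
      show "topspace ?Y \<subseteq> \<phi> ` topspace ?X"
      proof
        fix T assume "T \<in> topspace ?Y"
        then obtain A where A: "A \<in> ?C" "T = ?qC A" unfolding tY by blast
        then obtain Q B where QB: "Q \<in> Ortho" "B \<in> Z" "A = Q ** B" using P2 by blast
        then have "T = \<phi> (?qZ B)" using A Ogrp phi by simp
        then show "T \<in> \<phi> ` topspace ?X" unfolding tX using QB by blast
      qed
    qed
    show "inj_on \<phi> (topspace ?X)"
      unfolding tX
    proof (rule inj_onI)
      fix S1 S2 assume S1: "S1 \<in> ?qZ ` Z" and S2: "S2 \<in> ?qZ ` Z" and e: "\<phi> S1 = \<phi> S2"
      obtain B1 where B1: "B1 \<in> Z" "S1 = ?qZ B1" using S1 by blast
      obtain B2 where B2: "B2 \<in> Z" "S2 = ?qZ B2" using S2 by blast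
      have "?qC B1 = ?qC B2" using e B1 B2 phi by simp
      then have "?qZ B1 = ?qZ B2" using P3[OF B1(1) B2(1)] by simp
      then show "S1 = S2" using B1 B2 by simp
    qed
    show "continuous_map ?X ?Y \<phi>"
      unfolding continuous_map_def
    proof (intro conjI allI impI)
      show "\<phi> \<in> topspace ?X \<rightarrow> topspace ?Y"
        unfolding tX tY image_subset_iff_funcset[symmetric] phiimg[OF order_refl] by (rule img_sub)
      fix U assume U: "openin ?Y U"
      then have Usub: "U \<subseteq> ?qC ` ?C" and Uo: "openin (top_of_set ?C) {A \<in> ?C. ?qC A \<in> U}"
        unfolding openin_quot_top by auto
      obtain G where G: "open G" "{A \<in> ?C. ?qC A \<in> U} = ?C \<inter> G" using Uo by (auto simp: openin_open)
      have eqZ: "{B \<in> Z. ?qZ B \<in> {x \<in> topspace ?X. \<phi> x \<in> U}} = Z \<inter> G"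
      proof (intro set_eqI iffI)
        fix B assume "B \<in> {B \<in> Z. ?qZ B \<in> {x \<in> topspace ?X. \<phi> x \<in> U}}"
        then have B: "B \<in> Z" "\<phi> (?qZ B) \<in> U" by auto
        then have "?qC B \<in> U" using phi by simp
        then have "B \<in> {A \<in> ?C. ?qC A \<in> U}" using B P1 by blast
        then show "B \<in> Z \<inter> G" using G(2) B by blast
      next
        fix B assume B: "B \<in> Z \<inter> G"
        then have "B \<in> ?C \<inter> G" using P1 by blast
        then have "?qC B \<in> U" using G(2) by blast
        then have "\<phi> (?qZ B) \<in> U" using phi B by simp
        then show "B \<in> {B \<in> Z. ?qZ B \<in> {x \<in> topspace ?X. \<phi> x \<in> U}}" using B unfolding tX by blast
      qed
      have sub: "{x \<in> topspace ?X. \<phi> x \<in> U} \<subseteq> ?qZ ` topspace (subtopology euclidean Z)"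
        using tX by simp
      have op: "openin (subtopology euclidean Z) {B \<in> topspace (subtopology euclidean Z). ?qZ B \<in> {x \<in> topspace ?X. \<phi> x \<in> U}}"
        using eqZ G(1) by (simp add: openin_open_Int)
      show "openin ?X {x \<in> topspace ?X. \<phi> x \<in> U}"
        unfolding openin_quot_top using sub op by blast
    qed
    show "open_map ?X ?Y \<phi>"
      unfolding open_map_def
    proof (intro allI impI)
      fix U assume U: "openin ?X U"
      then have Usub: "U \<subseteq> ?qZ ` Z" and Uo: "openin (top_of_set Z) {B \<in> Z. ?qZ B \<in> U}"
        unfolding openin_quot_top by auto
      obtain G where G: "open G" "{B \<in> Z. ?qZ B \<in> U} = Z \<inter> G" using Uo by (auto simp: openin_open)
      define K where "K = {M::real^'n^'n. \<forall>h\<in>?H. M ** h = h ** M} \<inter> - G"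
      have Kc: "closed K" unfolding K_def using closed_cent G(1) by (intro closed_Int) auto
      define OK where "OK = {A. \<exists>Q. orthogonal_matrix Q \<and> transpose Q ** A \<in> K}"
      have OKc: "closed OK" unfolding OK_def by (rule closed_orbit_set[OF Kc])
      have eqT: "{A \<in> ?C. ?qC A \<in> \<phi> ` U} = ?C \<inter> - OK"
      proof (intro set_eqI iffI)
        fix A assume "A \<in> {A \<in> ?C. ?qC A \<in> \<phi> ` U}"
        then obtain S where A: "A \<in> ?C" and S: "S \<in> U" "?qC A = \<phi> S" by blast
        obtain B0 where B0: "B0 \<in> Z" "S = ?qZ B0" using S(1) Usub by blast
        have AB0: "?qC A = ?qC B0" using S B0 phi by simp
        have "A \<notin> OK"
        proof
          assume "A \<in> OK"
          then obtain Q where Q: "orthogonal_matrix Q" "transpose Q ** A \<in> K" unfolding OK_def by blast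
          define M where "M = transpose Q ** A"
          have iA: "invertible A" using A by (simp add: Cmem)
          have "orthogonal_matrix (transpose Q)" using Q(1) by simp
          then have "invertible M" unfolding M_def using invertible_mult[OF orth_invertible iA] by blast
          then have MZ: "M \<in> Z" using Q(2) Zmem unfolding M_def K_def by blast
          have "transpose Q \<in> Ortho" using Q(1) by (simp add: Omem)
          then have "?qC M = ?qC A" unfolding M_def by (rule Ogrp)
          then have "?qZ M = ?qZ B0" using P3[OF MZ B0(1)] AB0 by simp
          then have "?qZ M \<in> U" using S B0 by simp
          then have "M \<in> G" using MZ G(2) by blast
          then show False using Q(2) unfolding M_def K_def by blast
        qed
        then show "A \<in> ?C \<inter> - OK" using A by blast
      next
        fix A assume A: "A \<in> ?C \<inter> - OK"
        then obtain Q B where QB: "Q \<in> Ortho" "B \<in> Z" "A = Q ** B" using P2 by blast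
        have "transpose Q ** A = B" using QB by (simp add: Omem matrix_mul_assoc orthogonal_matrix)
        then have "B \<notin> K" using A QB unfolding OK_def by (auto simp: Omem)
        then have "B \<in> G" using QB(2) Zmem unfolding K_def by blast
        then have "?qZ B \<in> U" using G(2) QB(2) by blast
        moreover have "\<phi> (?qZ B) = ?qC A" using phi[OF QB(2)] Ogrp[OF QB(1), of B] QB(3) by simp
        ultimately show "A \<in> {A \<in> ?C. ?qC A \<in> \<phi> ` U}" using A by (metis (mono_tags, lifting) IntD1 image_eqI mem_Collect_eq)
      qed
      have "\<phi> ` U \<subseteq> ?qC ` ?C" using image_mono[OF Usub, of \<phi>] phiimg[OF order_refl] img_sub by blast
      moreover have "openin (top_of_set ?C) (?C \<inter> - OK)" using OKc by (intro openin_open_Int) (simp add: open_Compl)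
      ultimately show "openin ?Y (\<phi> ` U)" unfolding openin_quot_top using eqT by simp
    qed
  qed
  have P3': "\<forall>A\<in>Z. \<forall>B\<in>Z. (?qC A = ?qC B \<longleftrightarrow> ?qZ A = ?qZ B)" using P3 by blast
  have P4: "\<exists>\<phi>. (\<forall>B\<in>Z. \<phi> (?qZ B) = ?qC B) \<and> homeomorphic_map ?X ?Y \<phi>"
    using phi hom by blast
  show ?thesis using P1 P2 P3' P4 by (intro conjI)
qed

end
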